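(* Let $(M,g)$ be a locally symmetric space, $p\in M$, $\mathfrak p=T_pM$, and $\mathfrak h=\mathrm{span}\{R(X,Y)\mid X,Y\in\mathfrak p\}\subset\mathrm{End}(\mathfrak p)$ (curvature at $p$), a Lie algebra under the commutator. Let $B_{\mathfrak h}$ be the bilinear form on $\mathfrak h$ determined by $B_{\mathfrak h}(R(X,Y),R(Z,W))=g(R(X,Y)Z,W)$. Then $B_{\mathfrak h}$ is a well-defined, symmetric, non-degenerate, ad-invariant bilinear form, so $(\mathfrak h,B_{\mathfrak h})$ is a metrized Lie algebra; and if $C_{\mathfrak h}\in\mathfrak h\otimes\mathfrak h$ is its Casimir tensor and $\rho:\mathfrak h\hookrightarrow\mathrm{End}(\mathfrak p)$ is the inclusion representation, then $(\rho\otimes\rho)(C_{\mathfrak h})=\hat R_p$ in $\mathrm{End}(\mathfrak p)\otimes\mathrm{End}(\mathfrak p)$. Consequently the weight system $w_R$ of $(M,g)$ coincides with the Lie algebra weight system $w_{\rho(C_{\mathfrak h})}$; i.e. weight systems from symmetric spaces are of Lie algebra type.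
   Context: A locally symmetric space is a connected pseudo-Riemannian manifold $(M,g)$ with Levi-Civita connection $\nabla$ and curvature $R(X,Y)Z=\nabla_X\nabla_YZ-\nabla_Y\nabla_XZ-\nabla_{[X,Y]}Z$ satisfying $\nabla R=0$. In a frame $R(e_a,e_b)e_c=R^d_{abc}e_d$, $g^{ab}$ is the inverse metric, repeated indices summed, and $\hat R_p=\sum\hat R^{bd}_{ac}(e_b\otimes e^a)\otimes(e_d\otimes e^c)$ with $\hat R^{bd}_{ac}=g^{bx}R^d_{axc}$. A metrized Lie algebra is a Lie algebra with a non-degenerate symmetric bilinear form $B$ satisfying $B([z,x],y)+B(x,[z,y])=0$; its Casimir tensor $C\in\mathfrak h\otimes\mathfrak h$ is the inverse of $B$, i.e. $C=\sum_i x_i\otimes x^i$ for a basis $(x_i)$ and the $B$-dual basis $(x^i)$. For a symmetric tensor $H\in\mathrm{End}(V)\otimes\mathrm{End}(V)$, $w_H$ is the function on chord diagrams (oriented circle with $n$ chords) obtained by placing a copy of $H$ on each chord (first factor at one endpoint, second at the other) and contracting indices around the oriented circle: the upper (outgoing) index at each endpoint is contracted with the lower (incoming) index of the next endpoint along the circle. $w_R(D)$ denotes the (constant in $p$) value $w_{\hat R_p}(D)$. *)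

theory Defs
  imports "HOL-Analysis.Analysis"
begin

(* The tangent space p = T_pM is modelled as real^'n (standard basis e_a = axis a 1);
   endomorphisms of p are matrices real^'n^'n, with  (A *v e_a) $ b = A $ b $ a. *)

definition metric :: "real^'n^'n \<Rightarrow> real^'n \<Rightarrow> real^'n \<Rightarrow> real" where
  "metric G X Y = X \<bullet> (G *v Y)"

definition comm :: "real^'n^'n \<Rightarrow> real^'n^'n \<Rightarrow> real^'n^'n" where
  "comm A B = A ** B - B ** A"

(* Pointwise data at p of a locally symmetric pseudo-Riemannian manifold:
   g non-degenerate symmetric; R the curvature (R X Y = R(X,Y) as endomorphism),
   with the algebraic curvature identities and the identity R(X,Y).R = 0,
   which is what nabla R = 0 gives at p (Ricci identity). *)
definition locally_symmetric_curvature ::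
  "real^'n^'n \<Rightarrow> (real^'n \<Rightarrow> real^'n \<Rightarrow> real^'n^'n) \<Rightarrow> bool" where
  "locally_symmetric_curvature G Rm \<longleftrightarrow>
     transpose G = G \<and> invertible G \<and> bilinear Rm \<and>
     (\<forall>X Y. Rm X Y = - Rm Y X) \<and>
     (\<forall>X Y Z. Rm X Y *v Z + Rm Y Z *v X + Rm Z X *v Y = 0) \<and>
     (\<forall>X Y Z W. metric G (Rm X Y *v Z) W = - metric G Z (Rm X Y *v W)) \<and>
     (\<forall>X Y Z W. comm (Rm X Y) (Rm Z W) = Rm (Rm X Y *v Z) W + Rm Z (Rm X Y *v W))"

definition curv_algebra :: "(real^'n \<Rightarrow> real^'n \<Rightarrow> real^'n^'n) \<Rightarrow> (real^'n^'n) set" where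
  "curv_algebra Rm = span {Rm X Y | X Y. True}"

definition bilinear_on :: "'a::real_vector set \<Rightarrow> ('a \<Rightarrow> 'a \<Rightarrow> real) \<Rightarrow> bool" where
  "bilinear_on S B \<longleftrightarrow>
     (\<forall>x\<in>S. \<forall>y\<in>S. \<forall>z\<in>S. \<forall>a b.
        B (a *\<^sub>R x + b *\<^sub>R y) z = a * B x z + b * B y z \<and>
        B z (a *\<^sub>R x + b *\<^sub>R y) = a * B z x + b * B z y)"

(* (x_i)_{i in I} a basis of h and (y_i) its B-dual basis;
   the Casimir tensor is then sum_i x_i (x) y_i *)
definition casimir_basis ::
  "(real^'n^'n) set \<Rightarrow> (real^'n^'n \<Rightarrow> real^'n^'n \<Rightarrow> real) \<Rightarrow> nat set
     \<Rightarrow> (nat \<Rightarrow> real^'n^'n) \<Rightarrow> (nat \<Rightarrow> real^'n^'n) \<Rightarrow> bool" where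
  "casimir_basis h B I x y \<longleftrightarrow>
     finite I \<and> inj_on x I \<and> independent (x ` I) \<and> span (x ` I) = h \<and>
     (\<forall>i\<in>I. y i \<in> h) \<and>
     (\<forall>i\<in>I. \<forall>j\<in>I. B (x i) (y j) = (if i = j then 1 else 0))"

(* Tensors in End(p) (x) End(p) as coefficient functions T b a d c of
   (e_b (x) e^a) (x) (e_d (x) e^c). *)

definition rho_tensor ::
  "nat set \<Rightarrow> (nat \<Rightarrow> real^'n^'n) \<Rightarrow> (nat \<Rightarrow> real^'n^'n) \<Rightarrow> 'n \<Rightarrow> 'n \<Rightarrow> 'n \<Rightarrow> 'n \<Rightarrow> real" where
  "rho_tensor I x y b a d c = (\<Sum>i\<in>I. x i $ b $ a * y i $ d $ c)"

definition hat_R ::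
  "real^'n^'n \<Rightarrow> (real^'n \<Rightarrow> real^'n \<Rightarrow> real^'n^'n) \<Rightarrow> 'n \<Rightarrow> 'n \<Rightarrow> 'n \<Rightarrow> 'n \<Rightarrow> real" where
  "hat_R G Rm b a d c = (\<Sum>x\<in>UNIV. matrix_inv G $ b $ x * Rm (axis a 1) (axis x 1) $ d $ c)"

(* chord diagram with m chords: 2m points 0..2m-1 in cyclic order on the oriented circle,
   chords given by a fixed-point-free involution D *)
definition chord_diagram :: "nat \<Rightarrow> (nat \<Rightarrow> nat) \<Rightarrow> bool" where
  "chord_diagram m D \<longleftrightarrow> (\<forall>i<2*m. D i < 2*m \<and> D i \<noteq> i \<and> D (D i) = i)"

(* w_H(D): s k is the index carried by the arc from point k to point k+1, i.e. the upper
   index at k and the lower index at k+1; the lower index at k is s (k-1 mod 2m).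
   A copy of H on each chord {i, D i} with i < D i, first factor at i. *)
definition weight_system ::
  "('n::finite \<Rightarrow> 'n \<Rightarrow> 'n \<Rightarrow> 'n \<Rightarrow> real) \<Rightarrow> nat \<Rightarrow> (nat \<Rightarrow> nat) \<Rightarrow> real" where
  "weight_system H m D =
     (let prev = (\<lambda>k. (k + 2*m - 1) mod (2*m)) in
      \<Sum>s \<in> {..<2*m} \<rightarrow>\<^sub>E (UNIV :: 'n set).
        \<Prod>i \<in> {i. i < 2*m \<and> i < D i}. H (s i) (s (prev i)) (s (D i)) (s (prev (D i))))"

end

theory Submission
  imports Defs
begin

lemma pair_sym_abs:
  fixes f :: "'v \<Rightarrow> 'v \<Rightarrow> 'v \<Rightarrow> 'v \<Rightarrow> real"
  assumes a: "\<And>X Y Z W. f X Y Z W = - f Y X Z W"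
    and b: "\<And>X Y Z W. f X Y Z W = - f X Y W Z"
    and c: "\<And>X Y Z W. f X Y Z W + f Y Z X W + f Z X Y W = 0"
  shows "f X Y Z W = f Z W X Y"
proof -
  note c1 = c[of X Y Z W] c[of Y Z W X] c[of Z W X Y] c[of W X Y Z]
  show ?thesis using c1 a[of X Y Z W] a[of Y Z W X] a[of Z W X Y] a[of W X Y Z]
    b[of X Y Z W] b[of Y Z W X] b[of Z W X Y] b[of W X Y Z]
    a[of Y Z X W] b[of Y Z X W] a[of Z X Y W] b[of Z X Y W]
    a[of Z W Y X] b[of Z W Y X] a[of W X Z Y] b[of W X Z Y]
    a[of X Y W Z] b[of X Y W Z] a[of W Y X Z] b[of W Y X Z] a[of Y W Z X] b[of Y W Z X]
    a[of X Z Y W] b[of X Z Y W] a[of Z Y X W] b [of Z Y X W]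
    a[of W Z X Y] a[of X W Y Z] a[of Y X W Z] b[of Y X W Z] b[of X W Y Z] b[of W Z X Y] a[of Y X Z W] b[of Y X Z W]
    by linarith
qed

lemma metric_sym: "transpose G = G \<Longrightarrow> metric G X Y = metric G Y X"
  unfolding metric_def
  by (metis dot_lmul_matrix inner_commute transpose_transpose vector_transpose_matrix)

lemma linear_mv_left: "linear (\<lambda>A::real^'n^'m. A *v Z)"
  by (rule linearI) (simp_all add: matrix_vector_mult_add_rdistrib scaleR_matrix_vector_assoc)

lemma linear_metric_left: "linear (\<lambda>X. metric G X W)"
  unfolding metric_def by (rule linearI) (simp_all add: inner_add_left)

lemma linear_L: "linear (\<lambda>A. metric G (A *v Z) W)"
  using linear_compose[OF linear_mv_left linear_metric_left] by (simp add: o_def)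

lemma metric_lin_right: "linear (\<lambda>Y. metric G X Y)"
  unfolding metric_def by (rule linearI) (simp_all add: inner_add_right matrix_vector_right_distrib matrix_vector_mult_scaleR)

lemma mv_axis: "((A::real^'n^'m) *v axis a 1) $ b = A $ b $ a"
  by (simp add: matrix_vector_mult_basis column_def)

lemma bilinear_expand:
  fixes h :: "real^'n \<Rightarrow> real^'m \<Rightarrow> 'c::real_vector"
  assumes "bilinear h"
  shows "h X Y = (\<Sum>a\<in>UNIV. \<Sum>b\<in>UNIV. (X$a * Y$b) *\<^sub>R h (axis a 1) (axis b 1))"
proof -
  have "h X Y = h (\<Sum>a\<in>UNIV. X$a *\<^sub>R axis a 1) (\<Sum>b\<in>UNIV. Y$b *\<^sub>R axis b 1)"
    using basis_expansion[of X] basis_expansion[of Y] by (simp add: scalar_mult_eq_scaleR)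
  also have "\<dots> = (\<Sum>(a,b)\<in>UNIV \<times> UNIV. h (X$a *\<^sub>R axis a 1) (Y$b *\<^sub>R axis b 1))"
    by (rule bilinear_sum[OF assms])
  also have "\<dots> = (\<Sum>a\<in>UNIV. \<Sum>b\<in>UNIV. h (X$a *\<^sub>R axis a 1) (Y$b *\<^sub>R axis b 1))"
    by (simp add: sum.cartesian_product)
  also have "\<dots> = (\<Sum>a\<in>UNIV. \<Sum>b\<in>UNIV. (X$a * Y$b) *\<^sub>R h (axis a 1) (axis b 1))"
    by (simp add: bilinear_lmul[OF assms] bilinear_rmul[OF assms] mult.commute)
  finally show ?thesis .
qed

definition repr :: "(real^'n \<Rightarrow> real^'n \<Rightarrow> real^'n^'n) \<Rightarrow> ('n \<Rightarrow> 'n \<Rightarrow> real) \<Rightarrow> real^'n^'n" where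
  "repr Rm c = (\<Sum>a\<in>UNIV. \<Sum>b\<in>UNIV. c a b *\<^sub>R Rm (axis a 1) (axis b 1))"

definition coef :: "(real^'n \<Rightarrow> real^'n \<Rightarrow> real^'n^'n) \<Rightarrow> real^'n^'n \<Rightarrow> ('n \<Rightarrow> 'n \<Rightarrow> real)" where
  "coef Rm v = (SOME c. v = repr Rm c)"

definition Bf :: "real^'n^'n \<Rightarrow> (real^'n \<Rightarrow> real^'n \<Rightarrow> real^'n^'n) \<Rightarrow> real^'n^'n \<Rightarrow> real^'n^'n \<Rightarrow> real" where
  "Bf G Rm u v = (\<Sum>a\<in>UNIV. \<Sum>b\<in>UNIV. coef Rm v a b * metric G (u *v axis a 1) (axis b 1))"

lemma bilinear_metric_mv: "bilinear (\<lambda>X Y. metric G (u *v X) Y)"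
  unfolding bilinear_def
proof safe
  fix X show "linear (\<lambda>Y. metric G (u *v X) Y)" by (rule metric_lin_right)
next
  fix Y show "linear (\<lambda>X. metric G (u *v X) Y)"
    using linear_compose[OF matrix_vector_mul_linear linear_metric_left] by (simp add: o_def)
qed

lemma metric_expand:
  "metric G (u *v X) Y = (\<Sum>a\<in>UNIV. \<Sum>b\<in>UNIV. X$a * Y$b * metric G (u *v axis a 1) (axis b 1))"
  using bilinear_expand[OF bilinear_metric_mv, of G u X Y] by simp

lemma repr_in_span: "repr Rm c \<in> curv_algebra Rm"
  unfolding repr_def curv_algebra_def
  by (intro span_sum span_scale span_base) blast

lemma repr_add: "repr Rm c + repr Rm d = repr Rm (\<lambda>a b. c a b + d a b)"
  unfolding repr_def by (simp add: sum.distrib[symmetric] scaleR_add_left)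

lemma repr_scale: "k *\<^sub>R repr Rm c = repr Rm (\<lambda>a b. k * c a b)"
  unfolding repr_def by (simp add: scaleR_sum_right)

lemma repr_zero: "0 = repr Rm (\<lambda>a b. 0)"
  unfolding repr_def by simp

lemma L_repr: "metric G (repr Rm c *v Z) W = (\<Sum>a\<in>UNIV. \<Sum>b\<in>UNIV. c a b * metric G (Rm (axis a 1) (axis b 1) *v Z) W)"
  unfolding repr_def
  by (simp add: linear_sum[OF linear_L] linear_scale[OF linear_L])

lemma bilinear_on_agree:
  assumes B1: "bilinear_on (span S) B1" and B2: "bilinear_on (span S) B2"
    and st: "\<And>s t. s \<in> S \<Longrightarrow> t \<in> S \<Longrightarrow> B1 s t = B2 s t"
    and u: "u \<in> span S" and v: "v \<in> span S"
  shows "B1 u v = B2 u v"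
proof -
  have step1: "B1 u t = B2 u t" if t: "t \<in> S" and u: "u \<in> span S" for t u
  proof -
    have tS: "t \<in> span S" using t by (rule span_base)
    have "u \<in> span S \<and> B1 u t = B2 u t"
      using u
    proof (induction rule: span_induct)
      case (step x) then show ?case using st t by (simp add: span_base)
    next
      case base
      show ?case unfolding subspace_def mem_Collect_eq
      proof safe
        show "0 \<in> span S" by (rule span_zero)
        show "B1 0 t = B2 0 t"
          using B1 B2 tS unfolding bilinear_on_def
          by (metis add.right_neutral mult_zero_left scaleR_zero_left)
        fix x y assume x: "x \<in> span S" "B1 x t = B2 x t" and y: "y \<in> span S" "B1 y t = B2 y t"
        show "x + y \<in> span S" using x y by (simp add: span_add)
        show "B1 (x + y) t = B2 (x + y) t"
          using B1 B2 tS x y unfolding bilinear_on_def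
          by (metis mult_1 scaleR_one)
      next
        fix c x assume x: "x \<in> span S" "B1 x t = B2 x t"
        show "c *\<^sub>R x \<in> span S" using x by (simp add: span_scale)
        show "B1 (c *\<^sub>R x) t = B2 (c *\<^sub>R x) t"
          using B1 B2 tS x unfolding bilinear_on_def
          by (metis add.right_neutral mult_zero_left scaleR_zero_left)
      qed
    qed
    then show ?thesis by simp
  qed
  have "v \<in> span S \<and> B1 u v = B2 u v"
    using v
  proof (induction rule: span_induct)
    case (step x) then show ?case using step1 u by (simp add: span_base)
  next
    case base
    show ?case unfolding subspace_def mem_Collect_eq
    proof safe
      show "0 \<in> span S" by (rule span_zero)
      show "B1 u 0 = B2 u 0"
        using B1 B2 u unfolding bilinear_on_def
        by (metis add.right_neutral mult_zero_left scaleR_zero_left)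
      fix x y assume x: "x \<in> span S" "B1 u x = B2 u x" and y: "y \<in> span S" "B1 u y = B2 u y"
      show "x + y \<in> span S" using x y by (simp add: span_add)
      show "B1 u (x + y) = B2 u (x + y)"
        using B1 B2 u x y unfolding bilinear_on_def
        by (metis mult_1 scaleR_one)
    next
      fix c x assume x: "x \<in> span S" "B1 u x = B2 u x"
      show "c *\<^sub>R x \<in> span S" using x by (simp add: span_scale)
      show "B1 u (c *\<^sub>R x) = B2 u (c *\<^sub>R x)"
        using B1 B2 u x unfolding bilinear_on_def
        by (metis add.right_neutral mult_zero_left scaleR_zero_left)
    qed
  qed
  then show ?thesis by simp
qed

lemma swap4: "(\<Sum>a\<in>A. \<Sum>b\<in>B. \<Sum>x\<in>C. \<Sum>y\<in>D. F a b x y) = (\<Sum>x\<in>C. \<Sum>y\<in>D. \<Sum>a\<in>A. \<Sum>b\<in>B. F a b x y)"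
proof -
  have "(\<Sum>a\<in>A. \<Sum>b\<in>B. \<Sum>x\<in>C. \<Sum>y\<in>D. F a b x y) = (\<Sum>a\<in>A. \<Sum>x\<in>C. \<Sum>b\<in>B. \<Sum>y\<in>D. F a b x y)"
    by (rule sum.cong[OF refl], rule sum.swap)
  also have "\<dots> = (\<Sum>x\<in>C. \<Sum>a\<in>A. \<Sum>b\<in>B. \<Sum>y\<in>D. F a b x y)"
    by (rule sum.swap)
  also have "\<dots> = (\<Sum>x\<in>C. \<Sum>a\<in>A. \<Sum>y\<in>D. \<Sum>b\<in>B. F a b x y)"
    by (rule sum.cong[OF refl], rule sum.cong[OF refl], rule sum.swap)
  also have "\<dots> = (\<Sum>x\<in>C. \<Sum>y\<in>D. \<Sum>a\<in>A. \<Sum>b\<in>B. F a b x y)"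
    by (rule sum.cong[OF refl], rule sum.swap)
  finally show ?thesis .
qed

lemma span_induct_lin:
  assumes u: "u \<in> span S" and base: "\<And>s. s \<in> S \<Longrightarrow> P s" and z: "P 0"
    and add: "\<And>x y. P x \<Longrightarrow> P y \<Longrightarrow> P (x + y)" and sc: "\<And>c x. P x \<Longrightarrow> P (c *\<^sub>R x)"
  shows "P u"
proof (rule span_induct[OF u])
  show "subspace {x. P x}" unfolding subspace_def using z add sc by auto
qed (rule base)

lemma comm_add_l: "comm (x + y) (v::real^'n^'n) = comm x v + comm y v"
  by (simp add: comm_def matrix_matrix_mult_def vec_eq_iff sum.distrib algebra_simps)
lemma comm_add_r: "comm v (x + y) = comm v x + comm (v::real^'n^'n) y"
  by (simp add: comm_def matrix_matrix_mult_def vec_eq_iff sum.distrib algebra_simps)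
lemma comm_scale_l: "comm (c *\<^sub>R x) (v::real^'n^'n) = c *\<^sub>R comm x v"
  by (simp add: comm_def matrix_matrix_mult_def vec_eq_iff sum_distrib_left algebra_simps)
lemma comm_scale_r: "comm v (c *\<^sub>R x) = c *\<^sub>R comm v (x::real^'n^'n)"
  by (simp add: comm_def matrix_matrix_mult_def vec_eq_iff sum_distrib_left algebra_simps)
lemma comm_zero_l: "comm 0 (v::real^'n^'n) = 0"
  by (simp add: comm_def)
lemma comm_zero_r: "comm v (0::real^'n^'n) = 0"
  by (simp add: comm_def)

lemma metric_zero_l: "metric G 0 W = 0" by (simp add: metric_def)
lemma metric_zero_r: "metric G W 0 = 0" by (simp add: metric_def)

context
  fixes G :: "real^'n^'n" and Rm :: "real^'n \<Rightarrow> real^'n \<Rightarrow> real^'n^'n"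
  assumes LS: "locally_symmetric_curvature G Rm"
begin

lemma G_sym: "transpose G = G" using LS unfolding locally_symmetric_curvature_def by blast
lemma G_inv: "invertible G" using LS unfolding locally_symmetric_curvature_def by blast
lemma Rm_bil: "bilinear Rm" using LS unfolding locally_symmetric_curvature_def by blast
lemma Rm_anti: "Rm X Y = - Rm Y X" using LS unfolding locally_symmetric_curvature_def by blast
lemma Rm_bianchi: "Rm X Y *v Z + Rm Y Z *v X + Rm Z X *v Y = 0"
  using LS unfolding locally_symmetric_curvature_def by blast
lemma Rm_skew: "metric G (Rm X Y *v Z) W = - metric G Z (Rm X Y *v W)"
  using LS unfolding locally_symmetric_curvature_def by blast
lemma Rm_deriv: "comm (Rm X Y) (Rm Z W) = Rm (Rm X Y *v Z) W + Rm Z (Rm X Y *v W)"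
  using LS unfolding locally_symmetric_curvature_def by blast

lemma pair_sym: "metric G (Rm X Y *v Z) W = metric G (Rm Z W *v X) Y"
proof (rule pair_sym_abs[where f = "\<lambda>X Y Z W. metric G (Rm X Y *v Z) W"])
  fix X Y Z W
  show "metric G (Rm X Y *v Z) W = - metric G (Rm Y X *v Z) W"
    using Rm_anti[of X Y] linear_neg[OF linear_L[of G Z W], of "Rm Y X"] by simp
  show "metric G (Rm X Y *v Z) W = - metric G (Rm X Y *v W) Z"
    using Rm_skew[of X Y Z W] metric_sym[OF G_sym, of Z] by simp
  show "metric G (Rm X Y *v Z) W + metric G (Rm Y Z *v X) W + metric G (Rm Z X *v Y) W = 0"
    using arg_cong[OF Rm_bianchi[of X Y Z], of "\<lambda>V. metric G V W"]
    by (simp add: linear_add[OF linear_metric_left] linear_0[OF linear_metric_left])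
qed

lemma Rm_repr: "Rm X Y = repr Rm (\<lambda>a b. X$a * Y$b)"
  unfolding repr_def by (rule bilinear_expand[OF Rm_bil])

lemma h_repr: assumes "v \<in> curv_algebra Rm" shows "\<exists>c. v = repr Rm c"
  using assms unfolding curv_algebra_def
proof (induction rule: span_induct)
  case (step x) then show ?case using Rm_repr by blast
next
  case base
  show ?case unfolding subspace_def
    by (auto simp del: ex_simps, metis repr_zero, metis repr_add, metis repr_scale)
qed

lemma DS: "(\<Sum>a\<in>UNIV. \<Sum>b\<in>UNIV. c a b * metric G (repr Rm d *v axis a 1) (axis b 1))
   = (\<Sum>x\<in>UNIV. \<Sum>y\<in>UNIV. d x y * metric G (repr Rm c *v axis x 1) (axis y 1))"
proof -
  let ?P = "\<lambda>a b x y. metric G (Rm (axis x 1) (axis y 1) *v axis a 1) (axis b 1)"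
  have "(\<Sum>a\<in>UNIV. \<Sum>b\<in>UNIV. c a b * metric G (repr Rm d *v axis a 1) (axis b 1))
     = (\<Sum>a\<in>UNIV. \<Sum>b\<in>UNIV. \<Sum>x\<in>UNIV. \<Sum>y\<in>UNIV. c a b * d x y * ?P a b x y)"
    by (simp add: L_repr sum_distrib_left mult.assoc)
  also have "\<dots> = (\<Sum>x\<in>UNIV. \<Sum>y\<in>UNIV. \<Sum>a\<in>UNIV. \<Sum>b\<in>UNIV. c a b * d x y * ?P a b x y)"
    by (rule swap4)
  also have "\<dots> = (\<Sum>x\<in>UNIV. \<Sum>y\<in>UNIV. d x y * metric G (repr Rm c *v axis x 1) (axis y 1))"
    by (simp add: L_repr sum_distrib_left mult_ac pair_sym[of "axis x 1" "axis y 1" "axis a 1" "axis b 1" for x y a b])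
  finally show ?thesis .
qed

lemma Bf_repr:
  assumes u: "u \<in> curv_algebra Rm"
  shows "Bf G Rm u (repr Rm c) = (\<Sum>a\<in>UNIV. \<Sum>b\<in>UNIV. c a b * metric G (u *v axis a 1) (axis b 1))"
proof -
  obtain d where d: "u = repr Rm d" using h_repr[OF u] by blast
  have c0: "repr Rm c = repr Rm (coef Rm (repr Rm c))"
    unfolding coef_def by (rule someI[where x=c]) (rule refl)
  have "Bf G Rm u (repr Rm c) = (\<Sum>x\<in>UNIV. \<Sum>y\<in>UNIV. d x y * metric G (repr Rm (coef Rm (repr Rm c)) *v axis x 1) (axis y 1))"
    unfolding Bf_def d by (rule DS)
  also have "\<dots> = (\<Sum>x\<in>UNIV. \<Sum>y\<in>UNIV. d x y * metric G (repr Rm c *v axis x 1) (axis y 1))"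
    using c0 by simp
  also have "\<dots> = (\<Sum>a\<in>UNIV. \<Sum>b\<in>UNIV. c a b * metric G (u *v axis a 1) (axis b 1))"
    unfolding d by (rule DS[symmetric])
  finally show ?thesis .
qed

lemma Bf_gen:
  assumes u: "u \<in> curv_algebra Rm"
  shows "Bf G Rm u (Rm Z W) = metric G (u *v Z) W"
  using Bf_repr[OF u] Rm_repr[of Z W] metric_expand[of G u Z W] by (simp add: mult.assoc)

lemma Bf_lin1: "linear (\<lambda>u. Bf G Rm u v)"
  by (rule linearI)
     (simp_all add: Bf_def linear_add[OF linear_L] linear_scale[OF linear_L] sum.distrib
        linear_add[OF linear_metric_left] linear_scale[OF linear_metric_left] matrix_vector_mult_add_rdistrib
        scaleR_matrix_vector_assoc[symmetric]
        sum_distrib_left algebra_simps)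

lemma Bf_bilinear_on: "bilinear_on (curv_algebra Rm) (Bf G Rm)"
  unfolding bilinear_on_def
proof (intro ballI allI conjI)
  fix x y z a b
  show "Bf G Rm (a *\<^sub>R x + b *\<^sub>R y) z = a * Bf G Rm x z + b * Bf G Rm y z"
    by (simp add: linear_add[OF Bf_lin1] linear_scale[OF Bf_lin1])
  assume x: "x \<in> curv_algebra Rm" and y: "y \<in> curv_algebra Rm" and z: "z \<in> curv_algebra Rm"
  obtain cx where cx: "x = repr Rm cx" using h_repr[OF x] by blast
  obtain cy where cy: "y = repr Rm cy" using h_repr[OF y] by blast
  have "a *\<^sub>R x + b *\<^sub>R y = repr Rm (\<lambda>i j. a * cx i j + b * cy i j)"
    unfolding cx cy by (simp add: repr_scale repr_add)
  then show "Bf G Rm z (a *\<^sub>R x + b *\<^sub>R y) = a * Bf G Rm z x + b * Bf G Rm z y"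
    unfolding cx cy using Bf_repr[OF z]
    by (simp add: sum.distrib sum_distrib_left algebra_simps)
qed

lemma Bf_sym:
  assumes u: "u \<in> curv_algebra Rm" and v: "v \<in> curv_algebra Rm"
  shows "Bf G Rm u v = Bf G Rm v u"
proof -
  obtain c where c: "u = repr Rm c" using h_repr[OF u] by blast
  obtain d where d: "v = repr Rm d" using h_repr[OF v] by blast
  show ?thesis
    using Bf_repr[OF u, of d] Bf_repr[OF v, of c] DS[of d c] c d by simp
qed

lemma Ginv: "G ** matrix_inv G = mat 1" "matrix_inv G ** G = mat 1"
  using G_inv unfolding invertible_def matrix_inv_def by (metis (mono_tags, lifting) someI_ex)+

lemma Ginv_sym: "matrix_inv G $ i $ j = matrix_inv G $ j $ i"
proof -
  have "transpose (matrix_inv G) ** G = mat 1"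
    using arg_cong[OF Ginv(1), of transpose] G_sym by (simp add: matrix_transpose_mul)
  then have "transpose (matrix_inv G) = matrix_inv G"
    by (metis Ginv(1) matrix_mul_assoc matrix_mul_lid matrix_mul_rid)
  then show ?thesis by (metis transpose_def vec_lambda_beta)
qed

lemma metric_Ginv: "metric G X (matrix_inv G *v Y) = X \<bullet> Y"
  unfolding metric_def by (simp add: matrix_vector_mul_assoc Ginv)

lemma Bf_nondeg:
  assumes u: "u \<in> curv_algebra Rm" and h: "\<forall>v\<in>curv_algebra Rm. Bf G Rm u v = 0"
  shows "u = 0"
proof -
  have "u *v Z = 0" for Z
  proof -
    have "Rm Z (matrix_inv G *v (u *v Z)) \<in> curv_algebra Rm"
      unfolding curv_algebra_def by (rule span_base) blast
    then have "metric G (u *v Z) (matrix_inv G *v (u *v Z)) = 0"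
      using h Bf_gen[OF u] by metis
    then show ?thesis by (simp add: metric_Ginv)
  qed
  then show ?thesis by (simp add: matrix_eq)
qed

lemma gen_in_h: "Rm X Y \<in> curv_algebra Rm"
  unfolding curv_algebra_def by (rule span_base) blast

lemma Bf_add2: "a \<in> curv_algebra Rm \<Longrightarrow> x \<in> curv_algebra Rm \<Longrightarrow> y \<in> curv_algebra Rm \<Longrightarrow>
   Bf G Rm a (x + y) = Bf G Rm a x + Bf G Rm a y"
  using Bf_bilinear_on unfolding bilinear_on_def by (metis mult_1 scaleR_one)

lemma Bf_scale2: "a \<in> curv_algebra Rm \<Longrightarrow> x \<in> curv_algebra Rm \<Longrightarrow>
   Bf G Rm a (c *\<^sub>R x) = c * Bf G Rm a x"
  using Bf_bilinear_on unfolding bilinear_on_def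
  by (metis add.right_neutral mult_zero_left scaleR_zero_left)

lemma Bf_zero2: "a \<in> curv_algebra Rm \<Longrightarrow> Bf G Rm a 0 = 0"
  using Bf_scale2[of a a 0] by simp

lemma h_add: "x \<in> curv_algebra Rm \<Longrightarrow> y \<in> curv_algebra Rm \<Longrightarrow> x + y \<in> curv_algebra Rm"
  unfolding curv_algebra_def by (rule span_add)
lemma h_scale: "x \<in> curv_algebra Rm \<Longrightarrow> c *\<^sub>R x \<in> curv_algebra Rm"
  unfolding curv_algebra_def by (rule span_scale)
lemma h_zero: "0 \<in> curv_algebra Rm"
  unfolding curv_algebra_def by (rule span_zero)

lemma comm_in_h:
  assumes u: "u \<in> curv_algebra Rm" and v: "v \<in> curv_algebra Rm"
  shows "comm u v \<in> curv_algebra Rm"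
proof -
  have gen: "comm u (Rm Z W) \<in> curv_algebra Rm" if u: "u \<in> curv_algebra Rm" for u Z W
    using u[unfolded curv_algebra_def]
  proof (rule span_induct_lin)
    fix s assume "s \<in> {Rm X Y |X Y. True}"
    then obtain X Y where "s = Rm X Y" by blast
    then show "comm s (Rm Z W) \<in> curv_algebra Rm"
      using Rm_deriv h_add gen_in_h by metis
  qed (simp_all add: comm_zero_l comm_add_l comm_scale_l h_zero h_add h_scale)
  show ?thesis
    using v[unfolded curv_algebra_def]
  proof (rule span_induct_lin)
    fix s assume "s \<in> {Rm X Y |X Y. True}"
    then show "comm u s \<in> curv_algebra Rm" using gen[OF u] by blast
  qed (simp_all add: comm_zero_r comm_add_r comm_scale_r h_zero h_add h_scale)
qed

lemma skew_h:
  assumes z: "z \<in> curv_algebra Rm"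
  shows "metric G (z *v A) V = - metric G A (z *v V)"
  using z[unfolded curv_algebra_def]
proof (rule span_induct_lin)
  fix s assume "s \<in> {Rm X Y |X Y. True}"
  then show "metric G (s *v A) V = - metric G A (s *v V)" using Rm_skew by blast
qed (simp_all add: metric_def matrix_vector_mult_add_rdistrib inner_add_left inner_add_right
       scaleR_matrix_vector_assoc[symmetric] matrix_vector_right_distrib matrix_vector_mult_scaleR)

lemma deriv_h:
  assumes z: "z \<in> curv_algebra Rm"
  shows "comm z (Rm Z W) = Rm (z *v Z) W + Rm Z (z *v W)"
  using z[unfolded curv_algebra_def]
proof (rule span_induct_lin)
  fix s assume "s \<in> {Rm X Y |X Y. True}"
  then show "comm s (Rm Z W) = Rm (s *v Z) W + Rm Z (s *v W)" using Rm_deriv by blast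
next
  show "comm 0 (Rm Z W) = Rm (0 *v Z) W + Rm Z (0 *v W)"
    by (simp add: comm_zero_l bilinear_lzero[OF Rm_bil] bilinear_rzero[OF Rm_bil])
next
  fix x y
  assume "comm x (Rm Z W) = Rm (x *v Z) W + Rm Z (x *v W)" "comm y (Rm Z W) = Rm (y *v Z) W + Rm Z (y *v W)"
  then show "comm (x + y) (Rm Z W) = Rm ((x + y) *v Z) W + Rm Z ((x + y) *v W)"
    by (simp add: comm_add_l matrix_vector_mult_add_rdistrib bilinear_ladd[OF Rm_bil] bilinear_radd[OF Rm_bil])
next
  fix c x
  assume "comm x (Rm Z W) = Rm (x *v Z) W + Rm Z (x *v W)"
  then show "comm (c *\<^sub>R x) (Rm Z W) = Rm ((c *\<^sub>R x) *v Z) W + Rm Z ((c *\<^sub>R x) *v W)"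
    by (simp add: comm_scale_l scaleR_matrix_vector_assoc[symmetric] bilinear_lmul[OF Rm_bil]
        bilinear_rmul[OF Rm_bil] scaleR_add_right)
qed

lemma adinv:
  assumes z: "z \<in> curv_algebra Rm" and u: "u \<in> curv_algebra Rm" and v: "v \<in> curv_algebra Rm"
  shows "Bf G Rm (comm z u) v + Bf G Rm u (comm z v) = 0"
proof -
  have czu: "comm z u \<in> curv_algebra Rm" using comm_in_h[OF z u] .
  have gen: "Bf G Rm (comm z u) (Rm Z W) + Bf G Rm u (comm z (Rm Z W)) = 0" for Z W
  proof -
    have "Bf G Rm (comm z u) (Rm Z W) = metric G (z *v (u *v Z)) W - metric G (u *v (z *v Z)) W"
      using Bf_gen[OF czu]
      by (simp add: comm_def matrix_vector_mult_diff_rdistrib matrix_vector_mul_assoc metric_def inner_diff_left)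
    moreover have "Bf G Rm u (comm z (Rm Z W)) = metric G (u *v (z *v Z)) W + metric G (u *v Z) (z *v W)"
      using deriv_h[OF z] Bf_add2[OF u gen_in_h gen_in_h] Bf_gen[OF u] by simp
    moreover have "metric G (z *v (u *v Z)) W = - metric G (u *v Z) (z *v W)"
      by (rule skew_h[OF z])
    ultimately show ?thesis by simp
  qed
  have "v \<in> curv_algebra Rm \<and> Bf G Rm (comm z u) v + Bf G Rm u (comm z v) = 0"
    using v[unfolded curv_algebra_def]
  proof (rule span_induct_lin)
    fix s assume "s \<in> {Rm X Y |X Y. True}"
    then show "s \<in> curv_algebra Rm \<and> Bf G Rm (comm z u) s + Bf G Rm u (comm z s) = 0"
      using gen gen_in_h by blast
  next
    show "0 \<in> curv_algebra Rm \<and> Bf G Rm (comm z u) 0 + Bf G Rm u (comm z 0) = 0"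
      by (simp add: h_zero comm_zero_r Bf_zero2[OF czu] Bf_zero2[OF u])
  next
    fix x y
    assume x: "x \<in> curv_algebra Rm \<and> Bf G Rm (comm z u) x + Bf G Rm u (comm z x) = 0"
       and y: "y \<in> curv_algebra Rm \<and> Bf G Rm (comm z u) y + Bf G Rm u (comm z y) = 0"
    then show "x + y \<in> curv_algebra Rm \<and> Bf G Rm (comm z u) (x + y) + Bf G Rm u (comm z (x + y)) = 0"
      using Bf_add2[OF czu, of x y] Bf_add2[OF u, of "comm z x" "comm z y"] comm_in_h[OF z, of x]
        comm_in_h[OF z, of y]
      by (simp add: h_add comm_add_r)
  next
    fix c x
    assume x: "x \<in> curv_algebra Rm \<and> Bf G Rm (comm z u) x + Bf G Rm u (comm z x) = 0"
    then show "c *\<^sub>R x \<in> curv_algebra Rm \<and> Bf G Rm (comm z u) (c *\<^sub>R x) + Bf G Rm u (comm z (c *\<^sub>R x)) = 0"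
      using Bf_scale2[OF czu, of x c] Bf_scale2[OF u, of "comm z x" c] comm_in_h[OF z, of x]
      by (simp add: h_scale comm_scale_r distrib_left[symmetric])
  qed
  then show ?thesis by simp
qed

lemma casimir_expand:
  assumes cb: "casimir_basis (curv_algebra Rm) (Bf G Rm) I x y" and w: "w \<in> curv_algebra Rm"
  shows "w = (\<Sum>i\<in>I. Bf G Rm w (y i) *\<^sub>R x i)"
proof -
  have fin: "finite I" and inj: "inj_on x I" and sp: "span (x ` I) = curv_algebra Rm"
    and dual: "\<And>i j. i \<in> I \<Longrightarrow> j \<in> I \<Longrightarrow> Bf G Rm (x i) (y j) = (if i = j then 1 else 0)"
    using cb unfolding casimir_basis_def by auto
  have "w \<in> span (x ` I)" using w sp by simp
  then obtain cf where "w = (\<Sum>v\<in>x ` I. cf v *\<^sub>R v)"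
    using span_finite[of "x ` I"] fin by auto
  then have wc: "w = (\<Sum>i\<in>I. cf (x i) *\<^sub>R x i)"
    by (simp add: sum.reindex[OF inj])
  have "Bf G Rm w (y j) = cf (x j)" if j: "j \<in> I" for j
  proof -
    have "Bf G Rm w (y j) = (\<Sum>i\<in>I. cf (x i) * Bf G Rm (x i) (y j))"
      unfolding wc by (simp add: linear_sum[OF Bf_lin1] linear_scale[OF Bf_lin1])
    also have "\<dots> = (\<Sum>i\<in>I. cf (x i) * (if i = j then 1 else 0))"
      by (rule sum.cong) (simp_all add: dual j)
    also have "\<dots> = cf (x j)" using fin j by (simp add: if_distrib cong: if_cong)
    finally show ?thesis .
  qed
  then show ?thesis unfolding wc[symmetric] using wc by (metis (no_types, lifting) sum.cong)
qed

lemma casimir_tensor: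
  assumes cb: "casimir_basis (curv_algebra Rm) (Bf G Rm) I x y"
  shows "rho_tensor I x y = hat_R G Rm"
proof (intro ext)
  fix b a d c
  define f where "f k = matrix_inv G *v axis k 1" for k
  define w where "w = Rm (axis c 1) (f d)"
  have wh: "w \<in> curv_algebra Rm" unfolding w_def by (rule gen_in_h)
  have yh: "\<And>i. i \<in> I \<Longrightarrow> y i \<in> curv_algebra Rm" using cb unfolding casimir_basis_def by auto
  have met_ent: "metric G V (f k) = V $ k" for V k
    unfolding f_def by (simp add: metric_Ginv cart_eq_inner_axis)
  have yent: "y i $ d $ c = Bf G Rm w (y i)" if i: "i \<in> I" for i
  proof -
    have "y i $ d $ c = metric G (y i *v axis c 1) (f d)" by (simp add: met_ent mv_axis)
    also have "\<dots> = Bf G Rm (y i) w" unfolding w_def by (rule Bf_gen[OF yh[OF i], symmetric])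
    also have "\<dots> = Bf G Rm w (y i)" by (rule Bf_sym[OF yh[OF i] wh])
    finally show ?thesis .
  qed
  have "rho_tensor I x y b a d c = (\<Sum>i\<in>I. x i $ b $ a * Bf G Rm w (y i))"
    unfolding rho_tensor_def by (rule sum.cong) (simp_all add: yent)
  also have "\<dots> = (\<Sum>i\<in>I. Bf G Rm w (y i) *\<^sub>R x i) $ b $ a"
    by (simp add: mult.commute)
  also have "\<dots> = w $ b $ a" using casimir_expand[OF cb wh] by simp
  also have "\<dots> = metric G (w *v axis a 1) (f b)" by (simp add: met_ent mv_axis)
  also have "\<dots> = metric G (Rm (axis a 1) (f b) *v axis c 1) (f d)"
    unfolding w_def by (rule pair_sym)
  also have "\<dots> = Rm (axis a 1) (f b) $ d $ c" by (simp add: met_ent mv_axis)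
  also have "\<dots> = hat_R G Rm b a d c"
  proof -
    have lin: "linear (Rm (axis a 1))" using Rm_bil unfolding bilinear_def by blast
    have "Rm (axis a 1) (f b) = Rm (axis a 1) (\<Sum>k\<in>UNIV. f b $ k *\<^sub>R axis k 1)"
      using basis_expansion[of "f b"] by (simp add: scalar_mult_eq_scaleR)
    also have "\<dots> = (\<Sum>k\<in>UNIV. f b $ k *\<^sub>R Rm (axis a 1) (axis k 1))"
      by (simp add: linear_sum[OF lin] linear_scale[OF lin])
    finally have "Rm (axis a 1) (f b) $ d $ c = (\<Sum>k\<in>UNIV. f b $ k * Rm (axis a 1) (axis k 1) $ d $ c)"
      by simp
    moreover have "f b $ k = matrix_inv G $ b $ k" for k
      unfolding f_def by (simp add: mv_axis Ginv_sym)
    ultimately show ?thesis unfolding hat_R_def by simp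
  qed
  finally show "rho_tensor I x y b a d c = hat_R G Rm b a d c" .
qed

end

theorem theorem6:
  fixes G :: "real^'n^'n" and Rm :: "real^'n \<Rightarrow> real^'n \<Rightarrow> real^'n^'n"
  assumes "locally_symmetric_curvature G Rm"
  shows "\<exists>B. bilinear_on (curv_algebra Rm) B
    \<and> (\<forall>X Y Z W. B (Rm X Y) (Rm Z W) = metric G (Rm X Y *v Z) W)
    \<and> (\<forall>B'. bilinear_on (curv_algebra Rm) B'
            \<and> (\<forall>X Y Z W. B' (Rm X Y) (Rm Z W) = metric G (Rm X Y *v Z) W)
          \<longrightarrow> (\<forall>u\<in>curv_algebra Rm. \<forall>v\<in>curv_algebra Rm. B' u v = B u v))
    \<and> (\<forall>u\<in>curv_algebra Rm. \<forall>v\<in>curv_algebra Rm. comm u v \<in> curv_algebra Rm)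
    \<and> (\<forall>u\<in>curv_algebra Rm. \<forall>v\<in>curv_algebra Rm. B u v = B v u)
    \<and> (\<forall>u\<in>curv_algebra Rm. (\<forall>v\<in>curv_algebra Rm. B u v = 0) \<longrightarrow> u = 0)
    \<and> (\<forall>z\<in>curv_algebra Rm. \<forall>u\<in>curv_algebra Rm. \<forall>v\<in>curv_algebra Rm.
          B (comm z u) v + B u (comm z v) = 0)
    \<and> (\<forall>I x y. casimir_basis (curv_algebra Rm) B I x y \<longrightarrow>
          rho_tensor I x y = hat_R G Rm
          \<and> (\<forall>m D. chord_diagram m D \<longrightarrow>
                weight_system (hat_R G Rm) m D = weight_system (rho_tensor I x y) m D))"
proof (rule exI[of _ "Bf G Rm"], intro conjI allI impI ballI)
  note LS = assms
  show "bilinear_on (curv_algebra Rm) (Bf G Rm)" by (rule Bf_bilinear_on[OF LS])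
  show "Bf G Rm (Rm X Y) (Rm Z W) = metric G (Rm X Y *v Z) W" for X Y Z W
    by (rule Bf_gen[OF LS gen_in_h[OF LS]])
  show "B' u v = Bf G Rm u v"
    if "bilinear_on (curv_algebra Rm) B' \<and> (\<forall>X Y Z W. B' (Rm X Y) (Rm Z W) = metric G (Rm X Y *v Z) W)"
      and "u \<in> curv_algebra Rm" and "v \<in> curv_algebra Rm" for B' u v
    using that
    apply (unfold curv_algebra_def)
    apply (rule bilinear_on_agree[of "{Rm X Y |X Y. True}" B' "Bf G Rm"])
    using Bf_bilinear_on[OF LS] Bf_gen[OF LS gen_in_h[OF LS]] by (auto simp: curv_algebra_def)
  show "comm u v \<in> curv_algebra Rm" if "u \<in> curv_algebra Rm" "v \<in> curv_algebra Rm" for u v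
    using comm_in_h[OF LS that] .
  show "Bf G Rm u v = Bf G Rm v u" if "u \<in> curv_algebra Rm" "v \<in> curv_algebra Rm" for u v
    using Bf_sym[OF LS that] .
  show "u = 0" if "u \<in> curv_algebra Rm" "\<forall>v\<in>curv_algebra Rm. Bf G Rm u v = 0" for u
    using Bf_nondeg[OF LS that] .
  show "Bf G Rm (comm z u) v + Bf G Rm u (comm z v) = 0"
    if "z \<in> curv_algebra Rm" "u \<in> curv_algebra Rm" "v \<in> curv_algebra Rm" for z u v
    using adinv[OF LS that] .
  show "rho_tensor I x y = hat_R G Rm" if "casimir_basis (curv_algebra Rm) (Bf G Rm) I x y" for I x y
    using casimir_tensor[OF LS that] .
  then show "weight_system (hat_R G Rm) m D = weight_system (rho_tensor I x y) m D"
    if "casimir_basis (curv_algebra Rm) (Bf G Rm) I x y" for I x y m D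
    using that by simp
qed

end
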